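(* Let $\mathbb{F}\subseteq\mathbb{C}$ be a subfield closed under complex conjugation, $m\ge2$, $N\ge1$, and let $\zeta_1,\dots,\zeta_{m-1}\in\mathcal{P}_N^-[\mathbb{F}]$. If $\mathbf{u}(z)=(u_1,\dots,u_{m-1},\widetilde{u_m})^T$ and $\mathbf{v}(z)=(v_1,\dots,v_{m-1},\widetilde{v_m})^T$, with $u_i,v_i\in\mathcal{P}_N^+[\mathbb{F}]$, are two solutions of the system $(\mathcal{S})$ and $\mathbf{u}(1)=\mathbf{v}(1)$, then $\mathbf{u}(z)=\mathbf{v}(z)$ for every $z\in\mathbb{C}\setminus\{0\}$. In particular, if a solution $\mathbf{u}$ satisfies $\mathbf{u}(1)=0\in\mathbb{F}^m$, then $\mathbf{u}(z)=0$ for all $z\in\mathbb{C}\setminus\{0\}$.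
   Context: For a Laurent polynomial $p(z)=\sum_k c_kz^k$ write $\widetilde{p}(z)=\sum_k\overline{c_k}z^{-k}$. $\mathcal{P}_N^+[\mathbb{F}]=\{\sum_{k=0}^Nc_kz^k: c_k\in\mathbb{F}\}$, $\mathcal{P}_N^-[\mathbb{F}]=\{\sum_{k=1}^Nc_kz^{-k}: c_k\in\mathbb{F}\}$. Let $\mathcal{P}^+$ denote the set of polynomials in $z$ (Laurent polynomials with no negative powers). The system $(\mathcal{S})$ in unknowns $x_1,\dots,x_m$ is $$\zeta_i(z)x_m(z)-\widetilde{x_i}(z)\in\mathcal{P}^+\ (i=1,\dots,m-1),\qquad \sum_{i=1}^{m-1}\zeta_i(z)x_i(z)+\widetilde{x_m}(z)\in\mathcal{P}^+.$$ A vector $(u_1,\dots,u_{m-1},\widetilde{u_m})^T$ with $u_i\in\mathcal{P}_N^+[\mathbb{F}]$ is called a solution of $(\mathcal{S})$ if all these conditions hold with $x_i=u_i$, $i=1,\dots,m$. *)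

theory Defs
  imports Complex_Main "HOL-Computational_Algebra.Polynomial" "HOL-Computational_Algebra.Formal_Laurent_Series"
begin

definition conj_closed_subfield :: "complex set \<Rightarrow> bool" where
  "conj_closed_subfield F \<longleftrightarrow>
     0 \<in> F \<and> 1 \<in> F \<and>
     (\<forall>x\<in>F. \<forall>y\<in>F. x + y \<in> F \<and> x - y \<in> F \<and> x * y \<in> F) \<and>
     (\<forall>x\<in>F. x \<noteq> 0 \<longrightarrow> inverse x \<in> F) \<and>
     (\<forall>x\<in>F. cnj x \<in> F)"

definition in_PNplus :: "complex set \<Rightarrow> nat \<Rightarrow> complex poly \<Rightarrow> bool" where
  "in_PNplus F N p \<longleftrightarrow> degree p \<le> N \<and> (\<forall>k. coeff p k \<in> F)"

text \<open>An element sum_{k=1}^N c_k z^{-k} of P_N^-[F] is encoded by the polynomial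
  q = sum_k c_k X^k with coeff q 0 = 0, degree q <= N, coefficients in F.\<close>
definition in_PNminus :: "complex set \<Rightarrow> nat \<Rightarrow> complex poly \<Rightarrow> bool" where
  "in_PNminus F N q \<longleftrightarrow> coeff q 0 = 0 \<and> degree q \<le> N \<and> (\<forall>k. coeff q k \<in> F)"

definition lp_pos :: "complex poly \<Rightarrow> complex fls" where
  "lp_pos p = (\<Sum>k\<le>degree p. fls_const (coeff p k) * fls_X ^ k)"

definition lp_neg :: "complex poly \<Rightarrow> complex fls" where
  "lp_neg q = (\<Sum>k\<le>degree q. fls_const (coeff q k) * fls_X_inv ^ k)"

definition lp_tilde :: "complex poly \<Rightarrow> complex fls" where
  "lp_tilde p = lp_neg (map_poly cnj p)"

definition tilde_eval :: "complex poly \<Rightarrow> complex \<Rightarrow> complex" where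
  "tilde_eval p z = (\<Sum>k\<le>degree p. cnj (coeff p k) / z ^ k)"

definition in_Pplus :: "complex fls \<Rightarrow> bool" where
  "in_Pplus f \<longleftrightarrow> (\<forall>k<0. fls_nth f k = 0)"

definition is_solution ::
  "complex set \<Rightarrow> nat \<Rightarrow> nat \<Rightarrow> (nat \<Rightarrow> complex poly) \<Rightarrow> (nat \<Rightarrow> complex poly) \<Rightarrow> bool" where
  "is_solution F N m \<zeta> u \<longleftrightarrow>
     (\<forall>i\<in>{1..m}. in_PNplus F N (u i)) \<and>
     (\<forall>i\<in>{1..m-1}. in_Pplus (lp_neg (\<zeta> i) * lp_pos (u m) - lp_tilde (u i))) \<and>
     in_Pplus ((\<Sum>i\<in>{1..m-1}. lp_neg (\<zeta> i) * lp_pos (u i)) + lp_tilde (u m))"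

definition sol_vec :: "nat \<Rightarrow> (nat \<Rightarrow> complex poly) \<Rightarrow> complex \<Rightarrow> nat \<Rightarrow> complex" where
  "sol_vec m u z i = (if i < m then poly (u i) z else tilde_eval (u m) z)"

end

theory Submission
  imports Defs
begin

lemma Pplus_iff: "in_Pplus f \<longleftrightarrow> 0 \<le> fls_subdegree f"
  unfolding in_Pplus_def
  using fls_subdegree_ge0I fls_eq0_below_subdegree by fastforce

lemma Pplus_mult: "in_Pplus f \<Longrightarrow> in_Pplus g \<Longrightarrow> in_Pplus (f * g)"
proof -
  assume a: "in_Pplus f" "in_Pplus g"
  then have "0 \<le> fls_subdegree f" "0 \<le> fls_subdegree g" by (simp_all add: Pplus_iff)
  then show ?thesis unfolding in_Pplus_def by (auto intro!: fls_times_nth_eq0)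
qed

lemma Pplus_add: "in_Pplus f \<Longrightarrow> in_Pplus g \<Longrightarrow> in_Pplus (f + g)"
  by (auto simp: in_Pplus_def)

lemma Pplus_diff: "in_Pplus f \<Longrightarrow> in_Pplus g \<Longrightarrow> in_Pplus (f - g)"
  by (auto simp: in_Pplus_def)

lemma Pplus_sum: "(\<And>i. i \<in> A \<Longrightarrow> in_Pplus (f i)) \<Longrightarrow> in_Pplus (\<Sum>i\<in>A. f i)"
  by (auto simp: in_Pplus_def fls_nth_sum)

lemma fls_const_diff': "fls_const (a - b) = fls_const a - (fls_const b :: complex fls)"
  by (simp add: fls_eq_iff)

lemma lp_pos_N:
  assumes "degree p \<le> n"
  shows "lp_pos p = (\<Sum>k\<le>n. fls_const (coeff p k) * fls_X ^ k)"
  unfolding lp_pos_def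
  by (rule sum.mono_neutral_left) (use assms in \<open>auto simp: coeff_eq_0\<close>)

lemma lp_tilde_N:
  assumes "degree p \<le> n"
  shows "lp_tilde p = (\<Sum>k\<le>n. fls_const (cnj (coeff p k)) * fls_X_inv ^ k)"
proof -
  have d: "degree (map_poly cnj p) \<le> n"
    using degree_map_poly[of cnj p] assms by simp
  have "lp_tilde p = (\<Sum>k\<le>n. fls_const (coeff (map_poly cnj p) k) * fls_X_inv ^ k)"
    unfolding lp_tilde_def lp_neg_def
    by (rule sum.mono_neutral_left) (use d in \<open>auto simp: coeff_eq_0\<close>)
  also have "\<dots> = (\<Sum>k\<le>n. fls_const (cnj (coeff p k)) * fls_X_inv ^ k)"
    by (simp add: coeff_map_poly)
  finally show ?thesis .
qed

lemma lp_pos_diff: "lp_pos (p - q) = lp_pos p - lp_pos q"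
proof -
  define n where "n = max (degree p) (degree q)"
  have "degree (p - q) \<le> n" unfolding n_def by (rule degree_diff_le) auto
  then show ?thesis
    using lp_pos_N[of p n] lp_pos_N[of q n] lp_pos_N[of "p - q" n]
    by (simp add: n_def fls_const_diff' left_diff_distrib sum_subtractf)
qed

lemma lp_tilde_diff: "lp_tilde (p - q) = lp_tilde p - lp_tilde q"
proof -
  define n where "n = max (degree p) (degree q)"
  have "degree (p - q) \<le> n" unfolding n_def by (rule degree_diff_le) auto
  then show ?thesis
    using lp_tilde_N[of p n] lp_tilde_N[of q n] lp_tilde_N[of "p - q" n]
    by (simp add: n_def fls_const_diff' left_diff_distrib sum_subtractf)
qed

lemma Pplus_lp_pos: "in_Pplus (lp_pos p)"
  unfolding lp_pos_def in_Pplus_def by (simp add: fls_nth_sum)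

lemma term_nth:
  "fls_nth ((fls_const c * fls_X ^ a) * (fls_const d * fls_X_inv ^ b) :: complex fls) k
     = (if k = int a - int b then c * d else 0)"
proof -
  have eq: "(fls_const c * fls_X ^ a) * (fls_const d * fls_X_inv ^ b) =
        fls_const (c * d) * (fls_X ^ a * fls_X_inv ^ b)"
    by (simp flip: fls_const_mult_const add: ac_simps)
  moreover have X: "fls_nth (fls_X ^ a * fls_X_inv ^ b :: complex fls) k = (if k = int a - int b then 1 else 0)"
    by (simp add: fls_X_inv_power_times_conv_shift(2))
  ultimately show ?thesis unfolding eq fls_mult_const_nth(1) X by simp
qed


lemma core:
  fixes w :: "nat \<Rightarrow> complex poly" and \<zeta> :: "nat \<Rightarrow> complex poly"
  assumes m: "m \<ge> 1" and deg: "\<forall>i\<in>{1..m}. degree (w i) \<le> N"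
    and hA: "\<forall>i\<in>{1..m-1}. in_Pplus (lp_neg (\<zeta> i) * lp_pos (w m) - lp_tilde (w i))"
    and hB: "in_Pplus ((\<Sum>i\<in>{1..m-1}. lp_neg (\<zeta> i) * lp_pos (w i)) + lp_tilde (w m))"
    and h1: "\<forall>i\<in>{1..m}. poly (w i) 1 = 0"
  shows "\<forall>i\<in>{1..m}. w i = 0"
proof -
  define P where "P i = lp_pos (w i)" for i
  define T where "T i = lp_tilde (w i)" for i
  define Z where "Z i = lp_neg (\<zeta> i)" for i
  define S where "S = (\<Sum>i\<in>{1..m}. P i * T i)"
  have split: "{1..m} = insert m {1..m-1}" and nm: "m \<notin> {1..m-1}" using m by auto
  have S_eq: "S = P m * ((\<Sum>i\<in>{1..m-1}. Z i * P i) + T m) - (\<Sum>i\<in>{1..m-1}. P i * (Z i * P m - T i))"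
  proof -
    have "S = P m * T m + (\<Sum>i\<in>{1..m-1}. P i * T i)"
      unfolding S_def split using nm by simp
    moreover have "P m * (\<Sum>i\<in>{1..m-1}. Z i * P i) = (\<Sum>i\<in>{1..m-1}. P i * (Z i * P m))"
      by (simp add: sum_distrib_left ac_simps)
    ultimately show ?thesis
      by (simp add: algebra_simps sum_subtractf)
  qed
  have SP: "in_Pplus S"
    unfolding S_eq
  proof (rule Pplus_diff)
    show "in_Pplus (P m * ((\<Sum>i\<in>{1..m-1}. Z i * P i) + T m))"
      using hB by (intro Pplus_mult) (auto simp: P_def T_def Z_def Pplus_lp_pos)
    show "in_Pplus (\<Sum>i\<in>{1..m-1}. P i * (Z i * P m - T i))"
      using hA by (intro Pplus_sum Pplus_mult) (auto simp: P_def T_def Z_def Pplus_lp_pos)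
  qed
  define c where "c i a = coeff (w i) a" for i a
  define g where "g k = (\<Sum>i\<in>{1..m}. \<Sum>a\<le>N. \<Sum>b\<le>N.
        (if k = int a - int b then c i a * cnj (c i b) else 0))" for k
  have S_nth: "fls_nth S k = g k" for k
  proof -
    have "fls_nth (P i * T i) k = (\<Sum>a\<le>N. \<Sum>b\<le>N.
        (if k = int a - int b then c i a * cnj (c i b) else 0))" if i: "i \<in> {1..m}" for i
    proof -
      have "P i * T i = (\<Sum>a\<le>N. \<Sum>b\<le>N. (fls_const (c i a) * fls_X ^ a) *
               (fls_const (cnj (c i b)) * fls_X_inv ^ b))"
        unfolding P_def T_def c_def
        using lp_pos_N[of "w i" N] lp_tilde_N[of "w i" N] deg i
        by (simp add: sum_product)
      then show ?thesis by (simp add: fls_nth_sum term_nth)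
    qed
    then show ?thesis unfolding S_def g_def fls_nth_sum by simp
  qed
  have g_cnj: "cnj (g k) = g (-k)" for k
  proof -
    have "cnj (g k) = (\<Sum>i\<in>{1..m}. \<Sum>a\<le>N. \<Sum>b\<le>N.
        (if -k = int b - int a then c i b * cnj (c i a) else 0))"
      unfolding g_def cnj_sum by (intro sum.cong refl) auto
    also have "\<dots> = g (-k)"
      unfolding g_def by (rule sum.cong[OF refl], rule sum.swap)
    finally show ?thesis .
  qed
  have g_neg: "g k = 0" if "k < 0" for k
    using SP that S_nth unfolding in_Pplus_def by auto
  have g_nz: "g k = 0" if "k \<noteq> 0" for k
  proof (cases "k < 0")
    case False
    then have "g (-k) = 0" using that g_neg by auto
    then have "cnj (g k) = 0" using g_cnj by simp
    then show ?thesis by simp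
  qed (use g_neg in auto)
  have sum_g: "(\<Sum>k\<in>{-int N..int N}. g k) = (\<Sum>i\<in>{1..m}. \<Sum>a\<le>N. \<Sum>b\<le>N. c i a * cnj (c i b))"
  proof -
    have "(\<Sum>k\<in>{-int N..int N}. g k) = (\<Sum>i\<in>{1..m}. \<Sum>a\<le>N. \<Sum>b\<le>N. \<Sum>k\<in>{-int N..int N}.
        (if k = int a - int b then c i a * cnj (c i b) else 0))"
    proof -
      define F where "F i a b k = (if k = int a - int b then c i a * cnj (c i b) else 0)" for i a b k
      have "(\<Sum>k\<in>{-int N..int N}. g k) = (\<Sum>k\<in>{-int N..int N}. \<Sum>i\<in>{1..m}. \<Sum>a\<le>N. \<Sum>b\<le>N. F i a b k)"
        unfolding g_def F_def by simp
      also have "\<dots> = (\<Sum>i\<in>{1..m}. \<Sum>k\<in>{-int N..int N}. \<Sum>a\<le>N. \<Sum>b\<le>N. F i a b k)"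
        by (rule sum.swap)
      also have "\<dots> = (\<Sum>i\<in>{1..m}. \<Sum>a\<le>N. \<Sum>k\<in>{-int N..int N}. \<Sum>b\<le>N. F i a b k)"
        by (rule sum.cong[OF refl], rule sum.swap)
      also have "\<dots> = (\<Sum>i\<in>{1..m}. \<Sum>a\<le>N. \<Sum>b\<le>N. \<Sum>k\<in>{-int N..int N}. F i a b k)"
        by (rule sum.cong[OF refl], rule sum.cong[OF refl], rule sum.swap)
      finally show ?thesis unfolding F_def .
    qed
    also have "\<dots> = (\<Sum>i\<in>{1..m}. \<Sum>a\<le>N. \<Sum>b\<le>N. c i a * cnj (c i b))"
      by (intro sum.cong refl) (auto simp: sum.delta)
    finally show ?thesis .
  qed
  have "(\<Sum>k\<in>{-int N..int N}. g k) = g 0"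
    by (subst sum.remove[of _ 0]) (auto simp: g_nz)
  also have "g 0 = (\<Sum>i\<in>{1..m}. \<Sum>a\<le>N. c i a * cnj (c i a))"
    unfolding g_def by (intro sum.cong refl) (auto simp: sum.delta)
  finally have e1: "(\<Sum>i\<in>{1..m}. \<Sum>a\<le>N. c i a * cnj (c i a)) =
     (\<Sum>i\<in>{1..m}. \<Sum>a\<le>N. \<Sum>b\<le>N. c i a * cnj (c i b))" using sum_g by simp
  have polyN: "poly (w i) 1 = (\<Sum>a\<le>N. c i a)" if "i \<in> {1..m}" for i
  proof -
    have "poly (w i) 1 = (\<Sum>a\<le>degree (w i). c i a)"
      unfolding poly_altdef c_def by simp
    also have "\<dots> = (\<Sum>a\<le>N. c i a)"
      by (rule sum.mono_neutral_left) (use deg that in \<open>auto simp: c_def coeff_eq_0\<close>)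
    finally show ?thesis .
  qed
  have "(\<Sum>i\<in>{1..m}. \<Sum>a\<le>N. \<Sum>b\<le>N. c i a * cnj (c i b)) =
        (\<Sum>i\<in>{1..m}. poly (w i) 1 * cnj (poly (w i) 1))"
    by (intro sum.cong refl) (simp add: polyN cnj_sum sum_product)
  also have "\<dots> = 0" using h1 by simp
  finally have e2: "(\<Sum>i\<in>{1..m}. \<Sum>a\<le>N. c i a * cnj (c i a)) = 0" using e1 by simp
  have eq4: "(\<Sum>i\<in>{1..m}. \<Sum>a\<le>N. c i a * cnj (c i a)) =
        complex_of_real (\<Sum>i\<in>{1..m}. \<Sum>a\<le>N. (norm (c i a))^2)"
    unfolding of_real_sum complex_norm_square by (rule refl)
  have e3: "(\<Sum>i\<in>{1..m}. \<Sum>a\<le>N. (norm (c i a))^2) = 0"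
    using trans[OF eq4[symmetric] e2] by (simp only: of_real_eq_0_iff)
  have cz: "c i a = 0" if i: "i \<in> {1..m}" and a: "a \<le> N" for i a
  proof -
    have "(\<Sum>a\<le>N. (norm (c i a))^2) = 0"
      using e3 i by (subst (asm) sum_nonneg_eq_0_iff) (auto intro: sum_nonneg)
    then have "(norm (c i a))^2 = 0"
      using a by (subst (asm) sum_nonneg_eq_0_iff) auto
    then show ?thesis by simp
  qed
  show ?thesis
  proof
    fix i assume i: "i \<in> {1..m}"
    show "w i = 0"
    proof (rule poly_eqI)
      fix a show "coeff (w i) a = coeff 0 a"
      proof (cases "a \<le> N")
        case True then show ?thesis using cz[OF i True] by (simp add: c_def)
      next
        case False
        have "degree (w i) \<le> N" using deg i by blast
        with False show ?thesis by (simp add: coeff_eq_0)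
      qed
    qed
  qed
qed


lemma tilde_eval_1: "tilde_eval p 1 = cnj (poly p 1)"
  unfolding tilde_eval_def poly_altdef cnj_sum by simp

lemma h1_of_solvec:
  assumes "i \<in> {1..m}" "sol_vec m u 1 i = 0" "m \<ge> 1"
  shows "poly (u i) 1 = 0"
proof (cases "i < m")
  case True then show ?thesis using assms by (simp add: sol_vec_def)
next
  case False then have "i = m" using assms by auto
  then show ?thesis using assms by (simp add: sol_vec_def tilde_eval_1)
qed

theorem corollary1:
  fixes F :: "complex set" and m N :: nat and \<zeta> :: "nat \<Rightarrow> complex poly"
  assumes "conj_closed_subfield F"
    and "m \<ge> 2" and "N \<ge> 1"
    and "\<forall>i\<in>{1..m-1}. in_PNminus F N (\<zeta> i)"
  shows "(\<forall>u v. is_solution F N m \<zeta> u \<and> is_solution F N m \<zeta> v \<and>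
              (\<forall>i\<in>{1..m}. sol_vec m u 1 i = sol_vec m v 1 i) \<longrightarrow>
              (\<forall>z. z \<noteq> 0 \<longrightarrow> (\<forall>i\<in>{1..m}. sol_vec m u z i = sol_vec m v z i)))
       \<and> (\<forall>u. is_solution F N m \<zeta> u \<and> (\<forall>i\<in>{1..m}. sol_vec m u 1 i = 0) \<longrightarrow>
              (\<forall>z. z \<noteq> 0 \<longrightarrow> (\<forall>i\<in>{1..m}. sol_vec m u z i = 0)))"
proof (intro conjI allI impI)
  have m1: "m \<ge> 1" using assms by simp
  have mm: "m \<in> {1..m}" using m1 by simp
  {
    fix u v z
    assume H: "is_solution F N m \<zeta> u \<and> is_solution F N m \<zeta> v \<and>
              (\<forall>i\<in>{1..m}. sol_vec m u 1 i = sol_vec m v 1 i)"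
    define w where "w i = u i - v i" for i
    from H have su: "is_solution F N m \<zeta> u" and sv: "is_solution F N m \<zeta> v"
      and eq1: "\<forall>i\<in>{1..m}. sol_vec m u 1 i = sol_vec m v 1 i" by auto
    have deg: "\<forall>i\<in>{1..m}. degree (w i) \<le> N"
    proof
      fix i assume "i \<in> {1..m}"
      then have "degree (u i) \<le> N" "degree (v i) \<le> N"
        using su sv by (auto simp: is_solution_def in_PNplus_def)
      then show "degree (w i) \<le> N" unfolding w_def
        using degree_diff_le by blast
    qed
    have hA: "\<forall>i\<in>{1..m-1}. in_Pplus (lp_neg (\<zeta> i) * lp_pos (w m) - lp_tilde (w i))"
    proof
      fix i assume i: "i \<in> {1..m-1}"
      have eqA: "lp_neg (\<zeta> i) * lp_pos (w m) - lp_tilde (w i) =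
        (lp_neg (\<zeta> i) * lp_pos (u m) - lp_tilde (u i)) - (lp_neg (\<zeta> i) * lp_pos (v m) - lp_tilde (v i))"
        unfolding w_def lp_pos_diff lp_tilde_diff by (simp add: algebra_simps)
      show "in_Pplus (lp_neg (\<zeta> i) * lp_pos (w m) - lp_tilde (w i))"
        unfolding eqA
        by (rule Pplus_diff) (use su sv i in \<open>auto simp: is_solution_def\<close>)
    qed
    have hB: "in_Pplus ((\<Sum>i\<in>{1..m-1}. lp_neg (\<zeta> i) * lp_pos (w i)) + lp_tilde (w m))"
    proof -
      have eqB: "(\<Sum>i\<in>{1..m-1}. lp_neg (\<zeta> i) * lp_pos (w i)) + lp_tilde (w m) =
        ((\<Sum>i\<in>{1..m-1}. lp_neg (\<zeta> i) * lp_pos (u i)) + lp_tilde (u m)) -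
        ((\<Sum>i\<in>{1..m-1}. lp_neg (\<zeta> i) * lp_pos (v i)) + lp_tilde (v m))"
        unfolding w_def lp_pos_diff lp_tilde_diff by (simp add: algebra_simps sum_subtractf)
      show ?thesis
        unfolding eqB
        by (rule Pplus_diff) (use su sv in \<open>auto simp: is_solution_def\<close>)
    qed
    have h1: "\<forall>i\<in>{1..m}. poly (w i) 1 = 0"
    proof
      fix i assume i: "i \<in> {1..m}"
      have e: "sol_vec m u 1 i = sol_vec m v 1 i" using eq1 i by blast
      show "poly (w i) 1 = 0"
      proof (cases "i < m")
        case True then show ?thesis using e by (simp add: sol_vec_def w_def)
      next
        case False then have "i = m" using i by auto
        then show ?thesis using e by (simp add: sol_vec_def w_def tilde_eval_1)
      qed
    qed
    have "\<forall>i\<in>{1..m}. w i = 0" by (rule core[OF m1 deg hA hB h1])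
    then have uv: "\<forall>i\<in>{1..m}. u i = v i" by (simp add: w_def)
    show "\<forall>i\<in>{1..m}. sol_vec m u z i = sol_vec m v z i"
      using uv mm by (auto simp: sol_vec_def)
  }
  {
    fix u z
    assume H: "is_solution F N m \<zeta> u \<and> (\<forall>i\<in>{1..m}. sol_vec m u 1 i = 0)"
    have deg: "\<forall>i\<in>{1..m}. degree (u i) \<le> N"
      using H by (auto simp: is_solution_def in_PNplus_def)
    have hA: "\<forall>i\<in>{1..m-1}. in_Pplus (lp_neg (\<zeta> i) * lp_pos (u m) - lp_tilde (u i))"
      using H by (simp add: is_solution_def)
    have hB: "in_Pplus ((\<Sum>i\<in>{1..m-1}. lp_neg (\<zeta> i) * lp_pos (u i)) + lp_tilde (u m))"
      using H by (simp add: is_solution_def)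
    have h1: "\<forall>i\<in>{1..m}. poly (u i) 1 = 0"
      using H h1_of_solvec m1 by blast
    have uz: "\<forall>i\<in>{1..m}. u i = 0" by (rule core[OF m1 deg hA hB h1])
    show "\<forall>i\<in>{1..m}. sol_vec m u z i = 0"
      using uz mm by (auto simp: sol_vec_def tilde_eval_def)
  }
qed

end
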